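(* Consider the randomized gossip model described in the context and assume A1, A2 and A4. If $$\sum_{k=0}^\infty \prod_{s=k(n-1)}^{(k+1)(n-1)-1} T_s(1-T_s)=\infty,$$ then global agreement convergence is achieved almost surely, i.e. $\mathbf P(\limsup_{k\to\infty}\mathcal H(k)=0)=1$ for all initial times and initial values.
   Context: Network with node set $\mathcal V=\{1,\dots,n\}$, $n\ge 3$. Let $A=[a_{ij}]$ be an $n\times n$ stochastic matrix; the underlying digraph $\mathcal G_0$ has an arc $(j,i)$ iff $a_{ij}>0$. At each time $k=0,1,2,\dots$, independently of the past and of node states, a node $i$ is drawn with probability $1/n$ and then the pair $(i,j)$ is selected with probability $a_{ij}$. Given that pair $(i,j)$ is selected at time $k$, independently of time, node states and pair selection, node $i$: with probability $\alpha$ (event $\mathscr A_{ij}(k)$) sets $x_i(k+1)=(1-T_k)x_i(k)+T_kx_j(k)$, $0<T_k\le1$; with probability $\beta$ (event $\mathscr N_{ij}(k)$) keeps its state; with probability $\gamma$ (event $\mathscr R_{ij}(k)$) sets $x_i(k+1)=(1+S_k)x_i(k)-S_kx_j(k)$, $S_k>0$; $\alpha+\beta+\gamma=1$. Node $j$ updates analogously according to events $\mathscr A_{ji}(k),\mathscr N_{ji}(k),\mathscr R_{ji}(k)$; other nodes keep their states. Start at time $k_0\ge0$ from $x(k_0)\in\mathbb R^n$. $\mathcal H(k)=\max_i x_i(k)-\min_i x_i(k)$. A1: $\mathcal G_0$ is weakly connected. A2: $\mathscr R_{ij}(k)$ has probability zero for all $(i,j)$, $k$. A4: $\mathscr A_{ij}(k)\cap\mathscr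 A_{ji}(k)$ has probability zero for all $(i,j)$, $k$. *)

theory Defs
  imports "HOL-Probability.Probability"
begin

text \<open>Nodes are 0,...,n-1 (instead of 1,...,n). A state is a function nat => real,
  only the values at indices below n are relevant.\<close>

datatype act = Att | Neu | Rep
  \<comment> \<open>Att: attraction (event A), Neu: neglect/keep (event N), Rep: repulsion (event R)\<close>

text \<open>The randomness at one time step: (i, j, event of node i, event of node j).\<close>
type_synonym step = "nat \<times> nat \<times> act \<times> act"

fun act_upd :: "real \<Rightarrow> real \<Rightarrow> act \<Rightarrow> real \<Rightarrow> real \<Rightarrow> real" where
  "act_upd t s Att xi xj = (1 - t) * xi + t * xj"
| "act_upd t s Neu xi xj = xi"
| "act_upd t s Rep xi xj = (1 + s) * xi - s * xj"

text \<open>One gossip update with weights t = T_k, s = S_k; all nodes other than i, j keep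
  their state. (If i = j both formulas give x_i.)\<close>
definition gossip_upd :: "real \<Rightarrow> real \<Rightarrow> step \<Rightarrow> (nat \<Rightarrow> real) \<Rightarrow> (nat \<Rightarrow> real)" where
  "gossip_upd t s st x = (case st of (i, j, ei, ej) \<Rightarrow>
      x(i := act_upd t s ei (x i) (x j), j := act_upd t s ej (x j) (x i)))"

text \<open>Trajectory started at time k0 from x0: the m-th element of the stream omega is the
  randomness used at time k0 + m; gossip_traj T S k0 x0 omega m is x(k0 + m).\<close>
fun gossip_traj :: "(nat \<Rightarrow> real) \<Rightarrow> (nat \<Rightarrow> real) \<Rightarrow> nat \<Rightarrow> (nat \<Rightarrow> real)
                     \<Rightarrow> step stream \<Rightarrow> nat \<Rightarrow> (nat \<Rightarrow> real)" where
  "gossip_traj T S k0 x0 \<omega> 0 = x0"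
| "gossip_traj T S k0 x0 \<omega> (Suc m) =
     gossip_upd (T (k0 + m)) (S (k0 + m)) (\<omega> !! m) (gossip_traj T S k0 x0 \<omega> m)"

text \<open>State at absolute time k \<ge> k0 (for k < k0 it is just x0; irrelevant for the limsup).\<close>
definition gossip_state :: "(nat \<Rightarrow> real) \<Rightarrow> (nat \<Rightarrow> real) \<Rightarrow> nat \<Rightarrow> (nat \<Rightarrow> real)
                     \<Rightarrow> step stream \<Rightarrow> nat \<Rightarrow> (nat \<Rightarrow> real)" where
  "gossip_state T S k0 x0 \<omega> k = gossip_traj T S k0 x0 \<omega> (k - k0)"

definition spread :: "nat \<Rightarrow> (nat \<Rightarrow> real) \<Rightarrow> real" where
  "spread n x = (MAX i\<in>{..<n}. x i) - (MIN i\<in>{..<n}. x i)"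

definition stochastic_matrix :: "nat \<Rightarrow> (nat \<Rightarrow> nat \<Rightarrow> real) \<Rightarrow> bool" where
  "stochastic_matrix n a \<longleftrightarrow>
     (\<forall>i<n. \<forall>j<n. a i j \<ge> 0) \<and> (\<forall>i<n. (\<Sum>j<n. a i j) = 1)"

definition arcs :: "nat \<Rightarrow> (nat \<Rightarrow> nat \<Rightarrow> real) \<Rightarrow> (nat \<times> nat) set" where
  "arcs n a = {(j, i). i < n \<and> j < n \<and> a i j > 0}"

definition weakly_connected :: "nat \<Rightarrow> (nat \<Rightarrow> nat \<Rightarrow> real) \<Rightarrow> bool" where
  "weakly_connected n a \<longleftrightarrow>
     (\<forall>u<n. \<forall>v<n. (u, v) \<in> (arcs n a \<union> (arcs n a)\<inverse>)\<^sup>*)"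

end

theory Submission imports Defs begin

instance act :: countable by countable_datatype

fun run :: "(nat \<Rightarrow> real) \<Rightarrow> (nat \<Rightarrow> real) \<Rightarrow> nat \<Rightarrow> (nat \<Rightarrow> real) \<Rightarrow> step list \<Rightarrow> (nat \<Rightarrow> real)" where
  "run T S t x [] = x"
| "run T S t x (s # ss) = run T S (Suc t) (gossip_upd (T t) (S t) s x) ss"

lemma run_append: "run T S t x (xs @ ys) = run T S (t + length xs) (run T S t x xs) ys"
  by (induct xs arbitrary: t x) auto

lemma traj_Cons: "gossip_traj T S t x (s ## \<omega>) (Suc m) = gossip_traj T S (Suc t) (gossip_upd (T t) (S t) s x) \<omega> m"
  by (induct m) auto

lemma traj_run: "gossip_traj T S t x \<omega> m = run T S t x (stake m \<omega>)"
proof (induct m arbitrary: t x \<omega>)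
  case 0 then show ?case by simp
next
  case (Suc m)
  have "gossip_traj T S t x \<omega> (Suc m) = gossip_traj T S t x (shd \<omega> ## stl \<omega>) (Suc m)" by simp
  also have "\<dots> = gossip_traj T S (Suc t) (gossip_upd (T t) (S t) (shd \<omega>) x) (stl \<omega>) m" by (rule traj_Cons)
  also have "\<dots> = run T S t x (stake (Suc m) \<omega>)" using Suc by simp
  finally show ?case .
qed

lemma meas_stake:
  "stake m \<in> measurable (stream_space (measure_pmf (D::'a::countable pmf))) (count_space UNIV)"
  using measurable_cong_sets[OF sets_stream_space_cong[OF sets_measure_pmf_count_space] refl] measurable_stake
  by blast

lemma meas_stake_fun:
  "(\<lambda>\<omega>. g (stake m \<omega>)) \<in> borel_measurable (stream_space (measure_pmf (D::'a::countable pmf)))"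
  by (rule measurable_compose[OF meas_stake]) simp

lemma nn_stake_Suc:
  fixes D :: "'a::countable pmf"
  shows "(\<integral>\<^sup>+\<omega>. h (stake (Suc m) \<omega>) \<partial>stream_space (measure_pmf D))
       = (\<integral>\<^sup>+s. (\<integral>\<^sup>+\<omega>. h (s # stake m \<omega>) \<partial>stream_space (measure_pmf D)) \<partial>measure_pmf D)"
  by (subst prob_space.nn_integral_stream_space[OF prob_space_measure_pmf]) (auto intro: meas_stake_fun)

lemma nn_stake_add:
  fixes D :: "'a::countable pmf"
  shows "(\<integral>\<^sup>+\<omega>. h (stake (m + l) \<omega>) \<partial>stream_space (measure_pmf D))
       = (\<integral>\<^sup>+\<omega>. (\<integral>\<^sup>+\<omega>'. h (stake m \<omega> @ stake l \<omega>') \<partial>stream_space (measure_pmf D)) \<partial>stream_space (measure_pmf D))"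
proof (induct m arbitrary: h)
  case 0
  interpret P: prob_space "stream_space (measure_pmf D)"
    by (rule prob_space.prob_space_stream_space[OF prob_space_measure_pmf])
  show ?case by (simp add: P.emeasure_space_1)
next
  case (Suc m)
  have "(\<integral>\<^sup>+\<omega>. h (stake (Suc m + l) \<omega>) \<partial>stream_space (measure_pmf D))
     = (\<integral>\<^sup>+s. (\<integral>\<^sup>+\<omega>. h (s # stake (m + l) \<omega>) \<partial>stream_space (measure_pmf D)) \<partial>measure_pmf D)"
    using nn_stake_Suc[where h=h and m="m+l" and D=D] by simp
  also have "\<dots> = (\<integral>\<^sup>+s. (\<integral>\<^sup>+\<omega>. (\<integral>\<^sup>+\<omega>'. h (s # stake m \<omega> @ stake l \<omega>') \<partial>stream_space (measure_pmf D)) \<partial>stream_space (measure_pmf D)) \<partial>measure_pmf D)"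
    using Suc[of "\<lambda>xs. h (s # xs)" for s] by simp
  also have "\<dots> = (\<integral>\<^sup>+\<omega>. (\<integral>\<^sup>+\<omega>'. h (stake (Suc m) \<omega> @ stake l \<omega>') \<partial>stream_space (measure_pmf D)) \<partial>stream_space (measure_pmf D))"
    using nn_stake_Suc[where h="\<lambda>xs. (\<integral>\<^sup>+\<omega>'. h (xs @ stake l \<omega>') \<partial>stream_space (measure_pmf D))" and m=m and D=D] by simp
  finally show ?case .
qed

lemma nn_stake_eq:
  fixes D :: "'a::countable pmf"
  shows "(\<integral>\<^sup>+\<omega>. indicator {\<omega>. stake (length \<sigma>) \<omega> = \<sigma>} \<omega> \<partial>stream_space (measure_pmf D))
       = ennreal (prod_list (map (pmf D) \<sigma>))"
proof (induct \<sigma>)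
  case Nil
  interpret P: prob_space "stream_space (measure_pmf D)"
    by (rule prob_space.prob_space_stream_space[OF prob_space_measure_pmf])
  show ?case by (simp add: P.emeasure_space_1)
next
  case (Cons a \<sigma>)
  have "(\<integral>\<^sup>+\<omega>. indicator {\<omega>. stake (length (a # \<sigma>)) \<omega> = a # \<sigma>} \<omega> \<partial>stream_space (measure_pmf D))
      = (\<integral>\<^sup>+\<omega>. (\<lambda>xs. indicator {xs. xs = a # \<sigma>} xs) (stake (Suc (length \<sigma>)) \<omega>) \<partial>stream_space (measure_pmf D))"
    by (auto intro!: nn_integral_cong split: split_indicator)
  also have "\<dots> = (\<integral>\<^sup>+s. (\<integral>\<^sup>+\<omega>. indicator {xs. xs = a # \<sigma>} (s # stake (length \<sigma>) \<omega>) \<partial>stream_space (measure_pmf D)) \<partial>measure_pmf D)"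
    by (rule nn_stake_Suc)
  also have "\<dots> = (\<integral>\<^sup>+s. ennreal (prod_list (map (pmf D) \<sigma>)) * indicator {a} s \<partial>measure_pmf D)"
  proof (rule nn_integral_cong)
    fix s
    show "(\<integral>\<^sup>+\<omega>. indicator {xs. xs = a # \<sigma>} (s # stake (length \<sigma>) \<omega>) \<partial>stream_space (measure_pmf D))
       = ennreal (prod_list (map (pmf D) \<sigma>)) * indicator {a} s"
    proof (cases "s = a")
      case True
      have "(\<integral>\<^sup>+\<omega>. indicator {xs. xs = a # \<sigma>} (s # stake (length \<sigma>) \<omega>) \<partial>stream_space (measure_pmf D))
          = (\<integral>\<^sup>+\<omega>. indicator {\<omega>. stake (length \<sigma>) \<omega> = \<sigma>} \<omega> \<partial>stream_space (measure_pmf D))"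
        using True by (intro nn_integral_cong) (auto split: split_indicator)
      then show ?thesis using Cons True by simp
    next
      case False
      then show ?thesis by (simp split: split_indicator)
    qed
  qed
  also have "\<dots> = ennreal (prod_list (map (pmf D) \<sigma>)) * ennreal (pmf D a)"
    by (subst nn_integral_cmult_indicator) (auto simp: emeasure_pmf_single)
  also have "\<dots> = ennreal (prod_list (map (pmf D) (a # \<sigma>)))"
    by (simp add: ennreal_mult' mult.commute prod_list_nonneg)
  finally show ?case .
qed

lemma spread_le:
  assumes "0 < n" "\<And>i. i < n \<Longrightarrow> lo \<le> x i \<and> x i \<le> hi"
  shows "spread n x \<le> hi - lo"
proof -
  have "(MAX i\<in>{..<n}. x i) \<le> hi" using assms by (subst Max_le_iff) (auto intro: finite_imageI)
  moreover have "lo \<le> (MIN i\<in>{..<n}. x i)" using assms by (subst Min_ge_iff) (auto intro: finite_imageI)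
  ultimately show ?thesis unfolding spread_def by linarith
qed

lemma Min_le_x: "i < (n::nat) \<Longrightarrow> (MIN i\<in>{..<n}. x i) \<le> x i"
  by (rule Min_le) (auto intro: finite_imageI)

lemma x_le_Max: "i < (n::nat) \<Longrightarrow> x i \<le> (MAX i\<in>{..<n}. x i)"
  by (rule Max_ge) (auto intro: finite_imageI)

lemma spread_nonneg: "0 < n \<Longrightarrow> 0 \<le> spread n x"
  using Min_le_x[of 0 n x] x_le_Max[of 0 n x] unfolding spread_def by linarith

lemma argmax_ex: "0 < (n::nat) \<Longrightarrow> \<exists>r<n. x r = (MAX i\<in>{..<n}. x i)"
proof -
  assume "0 < n"
  then have "(MAX i\<in>{..<n}. x i) \<in> x ` {..<n}" by (intro Max_in) (auto intro: finite_imageI)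
  then show ?thesis by auto
qed

lemma act_upd_range:
  assumes "e \<noteq> Rep" "0 \<le> t" "t \<le> 1" "lo \<le> a" "a \<le> hi" "lo \<le> b" "b \<le> hi"
  shows "lo \<le> act_upd t s e a b \<and> act_upd t s e a b \<le> hi"
proof (cases e)
  case Att
  have "(1 - t) * lo \<le> (1 - t) * a" "(1 - t) * a \<le> (1 - t) * hi" "t * lo \<le> t * b" "t * b \<le> t * hi"
    using assms by (auto intro: mult_left_mono)
  then show ?thesis using Att by (simp add: algebra_simps)
qed (use assms in auto)

locale gos =
  fixes n :: nat and a :: "nat \<Rightarrow> nat \<Rightarrow> real"
    and J :: "(act \<times> act) pmf" and D :: "step pmf"
    and \<alpha> \<beta> \<gamma> :: real
    and T S :: "nat \<Rightarrow> real"
  assumes n3: "n \<ge> 3"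
    and stoch: "stochastic_matrix n a"
    and D_def: "\<And>i j ei ej. pmf D (i, j, ei, ej) =
                 (if i < n \<and> j < n then (1 / real n) * a i j * pmf J (ei, ej) else 0)"
    and alpha_pos: "\<alpha> > 0"
    and sum1: "\<alpha> + \<beta> + \<gamma> = 1"
    and marg_i: "pmf (map_pmf fst J) Att = \<alpha>" "pmf (map_pmf fst J) Neu = \<beta>"
                "pmf (map_pmf fst J) Rep = \<gamma>"
    and marg_j: "pmf (map_pmf snd J) Att = \<alpha>" "pmf (map_pmf snd J) Neu = \<beta>"
                "pmf (map_pmf snd J) Rep = \<gamma>"
    and T_range: "\<And>k. 0 < T k \<and> T k \<le> 1"
    and S_pos: "\<And>k. S k > 0"
    and A1: "weakly_connected n a"
    and A2: "\<gamma> = 0"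
    and A4: "pmf J (Att, Att) = 0"
begin

lemma supp_D:
  assumes "(i, j, ei, ej) \<in> set_pmf D"
  shows "i < n \<and> j < n \<and> ei \<noteq> Rep \<and> ej \<noteq> Rep"
proof -
  have p: "pmf D (i, j, ei, ej) > 0" using assms by (simp add: set_pmf_iff)
  then have ij: "i < n \<and> j < n" using D_def[of i j ei ej] by (auto split: if_splits)
  have "pmf J (ei, ej) \<noteq> 0" using p D_def[of i j ei ej] by (auto split: if_splits)
  then have J: "(ei, ej) \<in> set_pmf J" by (simp add: set_pmf_iff)
  then have "ei \<in> set_pmf (map_pmf fst J)" "ej \<in> set_pmf (map_pmf snd J)"
    by (force simp: set_map_pmf)+
  then have "ei \<noteq> Rep" "ej \<noteq> Rep" using marg_i(3) marg_j(3) A2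
    by (metis set_pmf_iff)+
  with ij show ?thesis by simp
qed

lemma upd_range:
  assumes "s \<in> set_pmf D" "\<And>i. i < n \<Longrightarrow> lo \<le> x i \<and> x i \<le> hi" "k < n"
  shows "lo \<le> gossip_upd (T t) (S t) s x k \<and> gossip_upd (T t) (S t) s x k \<le> hi"
proof -
  obtain i j ei ej where s: "s = (i, j, ei, ej)" by (cases s) auto
  from supp_D[of i j ei ej] assms(1) s have h: "i < n" "j < n" "ei \<noteq> Rep" "ej \<noteq> Rep" by auto
  have t: "0 \<le> T t" "T t \<le> 1" using T_range[of t] by auto
  have ri: "lo \<le> act_upd (T t) (S t) ei (x i) (x j) \<and> act_upd (T t) (S t) ei (x i) (x j) \<le> hi"
    using act_upd_range[OF h(3) t] assms(2)[of i] assms(2)[of j] h by auto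
  have rj: "lo \<le> act_upd (T t) (S t) ej (x j) (x i) \<and> act_upd (T t) (S t) ej (x j) (x i) \<le> hi"
    using act_upd_range[OF h(4) t] assms(2)[of i] assms(2)[of j] h by auto
  show ?thesis using ri rj assms(2)[OF assms(3)] unfolding s gossip_upd_def by auto
qed

lemma run_range:
  assumes "set \<sigma> \<subseteq> set_pmf D" "\<And>i. i < n \<Longrightarrow> lo \<le> x i \<and> x i \<le> hi" "k < n"
  shows "lo \<le> run T S t x \<sigma> k \<and> run T S t x \<sigma> k \<le> hi"
  using assms
proof (induct \<sigma> arbitrary: t x)
  case Nil then show ?case by simp
next
  case (Cons s \<sigma>)
  have "\<And>i. i < n \<Longrightarrow> lo \<le> gossip_upd (T t) (S t) s x i \<and> gossip_upd (T t) (S t) s x i \<le> hi"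
  proof -
    fix i assume "i < n"
    then show "lo \<le> gossip_upd (T t) (S t) s x i \<and> gossip_upd (T t) (S t) s x i \<le> hi"
      using upd_range[of s lo x hi i t] Cons.prems(1,2) by auto
  qed
  then show ?case using Cons by simp
qed

lemma n_pos: "0 < n" using n3 by simp

lemma spread_run:
  assumes "set \<sigma> \<subseteq> set_pmf D"
  shows "spread n (run T S t x \<sigma>) \<le> spread n x"
proof -
  have "spread n (run T S t x \<sigma>) \<le> (MAX i\<in>{..<n}. x i) - (MIN i\<in>{..<n}. x i)"
    by (rule spread_le[OF n_pos]) (intro run_range[OF assms] conjI Min_le_x x_le_Max; simp)
  then show ?thesis by (simp add: spread_def)
qed


lemma suppJ: "(e1, e2) \<in> set_pmf J \<Longrightarrow> e1 \<noteq> Rep \<and> e2 \<noteq> Rep"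
proof -
  assume J: "(e1, e2) \<in> set_pmf J"
  then have "e1 \<in> set_pmf (map_pmf fst J)" "e2 \<in> set_pmf (map_pmf snd J)"
    by (force simp: set_map_pmf)+
  then show ?thesis using marg_i(3) marg_j(3) A2 by (metis set_pmf_iff)
qed

lemma J_Rep1: "pmf J (Rep, e) = 0" using suppJ[of Rep e] by (metis set_pmf_iff)
lemma J_Rep2: "pmf J (e, Rep) = 0" using suppJ[of e Rep] by (metis set_pmf_iff)

lemma UNIV_act: "(UNIV :: act set) = {Att, Neu, Rep}"
proof -
  { fix x :: act have "x \<in> {Att, Neu, Rep}" by (cases x) auto }
  then show ?thesis by blast
qed

lemma J_AN: "pmf J (Att, Neu) = \<alpha>"
proof -
  have "fst -` {Att} = {Att} \<times> (UNIV :: act set)" by auto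
  also have "\<dots> = {(Att, Att), (Att, Neu), (Att, Rep)}" unfolding UNIV_act by auto
  finally have e: "fst -` {Att} = {(Att, Att), (Att, Neu), (Att, Rep)}" .
  have "\<alpha> = measure (measure_pmf J) (fst -` {Att})" using marg_i(1) by (simp add: pmf_map)
  also have "\<dots> = pmf J (Att, Att) + pmf J (Att, Neu) + pmf J (Att, Rep)"
    unfolding e by (simp add: measure_measure_pmf_finite)
  finally show ?thesis using A4 J_Rep2 by simp
qed

lemma J_NA: "pmf J (Neu, Att) = \<alpha>"
proof -
  have "snd -` {Att} = (UNIV :: act set) \<times> {Att}" by auto
  also have "\<dots> = {(Att, Att), (Neu, Att), (Rep, Att)}" unfolding UNIV_act by auto
  finally have e: "snd -` {Att} = {(Att, Att), (Neu, Att), (Rep, Att)}" .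
  have "\<alpha> = measure (measure_pmf J) (snd -` {Att})" using marg_j(1) by (simp add: pmf_map)
  also have "\<dots> = pmf J (Att, Att) + pmf J (Neu, Att) + pmf J (Rep, Att)"
    unfolding e by (simp add: measure_measure_pmf_finite)
  finally show ?thesis using A4 J_Rep1 by simp
qed

definition p0 :: real where
  "p0 = Min (insert 1 {1 / real n * a i j * \<alpha> | i j. i < n \<and> j < n \<and> 0 < a i j})"

lemma p0_fin: "finite {1 / real n * a i j * \<alpha> | i j. i < n \<and> j < n \<and> 0 < a i j}"
proof -
  have "{1 / real n * a i j * \<alpha> | i j. i < n \<and> j < n \<and> 0 < a i j}
        \<subseteq> (\<lambda>(i, j). 1 / real n * a i j * \<alpha>) ` ({..<n} \<times> {..<n})" by auto
  then show ?thesis by (rule finite_subset) auto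
qed

lemma p0_pos: "0 < p0"
  unfolding p0_def using p0_fin alpha_pos n_pos by (subst Min_gr_iff) auto

lemma p0_le1: "p0 \<le> 1"
  unfolding p0_def using p0_fin by (intro Min_le) auto

lemma p0_le: "i < n \<Longrightarrow> j < n \<Longrightarrow> 0 < a i j \<Longrightarrow> p0 \<le> 1 / real n * a i j * \<alpha>"
  unfolding p0_def using p0_fin by (intro Min_le) auto

definition good :: "step \<Rightarrow> bool" where
  "good s \<longleftrightarrow> s \<in> set_pmf D \<and> p0 \<le> pmf D s"

lemma good1: "u < n \<Longrightarrow> v < n \<Longrightarrow> 0 < a u v \<Longrightarrow> good (u, v, Att, Neu)"
  using p0_le[of u v] p0_pos unfolding good_def by (auto simp: set_pmf_iff D_def J_AN)

lemma good2: "u < n \<Longrightarrow> v < n \<Longrightarrow> 0 < a v u \<Longrightarrow> good (v, u, Neu, Att)"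
  using p0_le[of v u] p0_pos unfolding good_def by (auto simp: set_pmf_iff D_def J_NA)

end

lemma upd_move1: "u \<noteq> v \<Longrightarrow> gossip_upd t s' (u, v, Att, Neu) y = y(u := (1 - t) * y u + t * y v)"
  by (auto simp: gossip_upd_def fun_eq_iff)

lemma upd_move2: "u \<noteq> v \<Longrightarrow> gossip_upd t s' (v, u, Neu, Att) y = y(u := (1 - t) * y u + t * y v)"
  by (auto simp: gossip_upd_def fun_eq_iff)

lemma rtrancl_cross: "(x, y) \<in> Q\<^sup>* \<Longrightarrow> x \<in> R \<Longrightarrow> y \<notin> R \<Longrightarrow> \<exists>u v. (u, v) \<in> Q \<and> u \<in> R \<and> v \<notin> R"
  by (induct rule: rtrancl_induct) auto

lemma prod_list_ge: "(\<forall>s\<in>set \<sigma>. p \<le> f s) \<Longrightarrow> 0 \<le> (p::real) \<Longrightarrow> p ^ length \<sigma> \<le> prod_list (map f \<sigma>)"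
proof (induct \<sigma>)
  case (Cons s \<sigma>)
  then have h: "p \<le> f s" "p ^ length \<sigma> \<le> prod_list (map f \<sigma>)" by auto
  then have "p * p ^ length \<sigma> \<le> f s * prod_list (map f \<sigma>)"
    using Cons.prems(2) by (intro mult_mono) auto
  then show ?case by simp
qed simp

context gos begin

lemma edge_ex:
  assumes "R \<subseteq> {..<n}" "r \<in> R" "w < n" "w \<notin> R"
  shows "\<exists>u v. u < n \<and> v \<in> R \<and> u \<notin> R \<and> (0 < a u v \<or> 0 < a v u)"
proof -
  have "r < n" using assms by auto
  then have "(r, w) \<in> (arcs n a \<union> (arcs n a)\<inverse>)\<^sup>*" using A1 assms unfolding weakly_connected_def by auto
  then obtain p q where pq: "(p, q) \<in> arcs n a \<union> (arcs n a)\<inverse>" "p \<in> R" "q \<notin> R"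
    using rtrancl_cross[OF _ assms(2) assms(4)] by blast
  then show ?thesis unfolding arcs_def by auto
qed

lemma grow:
  assumes "R \<subseteq> {..<n}" "card R + k = n" "R \<noteq> {}" "0 \<le> c" "0 \<le> H0"
    "\<And>w. w < n \<Longrightarrow> lo \<le> y w" "\<And>w. w \<in> R \<Longrightarrow> lo + c * H0 \<le> y w"
  shows "\<exists>\<sigma>. length \<sigma> = k \<and> (\<forall>s\<in>set \<sigma>. good s) \<and>
           (\<forall>w<n. lo + c * (\<Prod>s\<in>{t..<t+k}. T s) * H0 \<le> run T S t y \<sigma> w)"
  using assms
proof (induct k arbitrary: R y t c)
  case 0
  have R: "R = {..<n}" using 0(1,2) by (intro card_subset_eq) simp_all
  have "\<forall>w<n. lo + c * H0 \<le> y w" using 0(7) R by blast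
  then show ?case by (intro exI[of _ "[]"]) simp
next
  case (Suc k)
  have finR: "finite R" using Suc.prems(1) finite_subset by blast
  have cR: "card R < n" using Suc.prems(2) by simp
  have "\<not> {..<n} \<subseteq> R"
  proof
    assume "{..<n} \<subseteq> R"
    then have "card {..<n} \<le> card R" using finR by (rule card_mono[rotated])
    then show False using cR by simp
  qed
  then obtain w where w: "w < n" "w \<notin> R" by blast
  obtain r where r: "r \<in> R" using Suc.prems(3) by auto
  obtain u v where uv: "u < n" "v \<in> R" "u \<notin> R" "0 < a u v \<or> 0 < a v u"
    using edge_ex[OF Suc.prems(1) r w] by blast
  have vn: "v < n" using uv Suc.prems(1) by auto
  have uv_ne: "u \<noteq> v" using uv by auto
  define y' where "y' = y(u := (1 - T t) * y u + T t * y v)"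
  obtain s where s: "good s" "gossip_upd (T t) (S t) s y = y'"
  proof (cases "0 < a u v")
    case True
    then show ?thesis using that[of "(u, v, Att, Neu)"] good1[OF uv(1) vn] upd_move1[OF uv_ne] y'_def by auto
  next
    case False
    then have "0 < a v u" using uv by auto
    then show ?thesis using that[of "(v, u, Neu, Att)"] good2[OF uv(1) vn] upd_move2[OF uv_ne] y'_def by auto
  qed
  have Tt: "0 < T t" "T t \<le> 1" using T_range[of t] by auto
  have ylo: "lo \<le> y u" "lo \<le> y v" using Suc.prems(6) uv vn by auto
  have yv: "lo + c * H0 \<le> y v" using Suc.prems(7) uv by auto
  have cH: "0 \<le> c * H0" using Suc.prems(4,5) by simp
  have key1: "(1 - T t) * lo \<le> (1 - T t) * y u" using Tt ylo by (intro mult_left_mono) auto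
  have key2: "T t * (lo + c * H0) \<le> T t * y v" using Tt yv by (intro mult_left_mono) auto
  have key3: "T t * (c * H0) \<le> c * H0" using Tt cH by (simp add: mult_left_le_one_le)
  have new_u: "lo + T t * c * H0 \<le> (1 - T t) * y u + T t * y v"
    using key1 key2 by (simp add: algebra_simps)
  have IH: "\<exists>\<sigma>. length \<sigma> = k \<and> (\<forall>s\<in>set \<sigma>. good s) \<and>
           (\<forall>w<n. lo + (T t * c) * (\<Prod>s\<in>{Suc t..<Suc t+k}. T s) * H0 \<le> run T S (Suc t) y' \<sigma> w)"
  proof (rule Suc.hyps)
    show "insert u R \<subseteq> {..<n}" using Suc.prems(1) uv by auto
    show "card (insert u R) + k = n" using Suc.prems(2) finR uv by simp
    show "insert u R \<noteq> {}" by simp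
    show "0 \<le> T t * c" using Tt Suc.prems(4) by simp
    show "0 \<le> H0" by fact
    show "lo \<le> y' w" if "w < n" for w
    proof (cases "w = u")
      case True
      have "(1 - T t) * lo + T t * lo \<le> (1 - T t) * y u + T t * y v"
        using key1 Tt ylo by (intro add_mono mult_left_mono) auto
      then show ?thesis using True y'_def by (simp add: algebra_simps)
    qed (use Suc.prems(6) that y'_def in auto)
    show "lo + T t * c * H0 \<le> y' w" if "w \<in> insert u R" for w
    proof (cases "w = u")
      case True
      then show ?thesis using new_u y'_def by simp
    next
      case False
      then have "lo + c * H0 \<le> y w" using that Suc.prems(7) by auto
      then show ?thesis using False key3 y'_def by (simp add: mult.assoc)
    qed
  qed
  then obtain \<sigma> where \<sigma>: "length \<sigma> = k" "\<forall>s\<in>set \<sigma>. good s"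
    "\<forall>w<n. lo + (T t * c) * (\<Prod>s\<in>{Suc t..<Suc t+k}. T s) * H0 \<le> run T S (Suc t) y' \<sigma> w" by blast
  have P: "(\<Prod>s\<in>{t..<t+Suc k}. T s) = T t * (\<Prod>s\<in>{Suc t..<Suc t+k}. T s)"
    by (subst prod.atLeast_Suc_lessThan) auto
  have eqc: "lo + c * (\<Prod>s\<in>{t..<t+Suc k}. T s) * H0 = lo + (T t * c) * (\<Prod>s\<in>{Suc t..<Suc t+k}. T s) * H0"
    unfolding P by (simp only: mult_ac)
  have run_eq: "run T S t y (s # \<sigma>) = run T S (Suc t) y' \<sigma>" using s(2) by simp
  show ?case
  proof (intro exI[of _ "s # \<sigma>"] conjI allI impI)
    show "length (s # \<sigma>) = Suc k" using \<sigma>(1) by simp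
    show "\<forall>x\<in>set (s # \<sigma>). good x" using \<sigma>(2) s(1) by simp
    fix w assume "w < n"
    then show "lo + c * (\<Prod>s\<in>{t..<t+Suc k}. T s) * H0 \<le> run T S t y (s # \<sigma>) w"
      unfolding eqc run_eq using \<sigma>(3) by blast
  qed
qed

lemma window:
  "\<exists>\<sigma>. length \<sigma> = n - 1 \<and> set \<sigma> \<subseteq> set_pmf D \<and> p0 ^ (n - 1) \<le> prod_list (map (pmf D) \<sigma>) \<and>
       spread n (run T S t y \<sigma>) \<le> (1 - (\<Prod>s\<in>{t..<t+(n-1)}. T s)) * spread n y"
proof -
  define lo where "lo = (MIN i\<in>{..<n}. y i)"
  define hi where "hi = (MAX i\<in>{..<n}. y i)"
  obtain r where r: "r < n" "y r = hi" using argmax_ex[OF n_pos, of y] hi_def by auto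
  have H: "spread n y = hi - lo" unfolding spread_def lo_def hi_def by simp
  have H0: "0 \<le> hi - lo" using spread_nonneg[OF n_pos, of y] H by simp
  have rng: "\<And>i. i < n \<Longrightarrow> lo \<le> y i \<and> y i \<le> hi" unfolding lo_def hi_def
    by (intro conjI Min_le_x x_le_Max)
  obtain \<sigma> where \<sigma>: "length \<sigma> = n - 1" "\<forall>s\<in>set \<sigma>. good s"
    "\<forall>w<n. lo + 1 * (\<Prod>s\<in>{t..<t+(n-1)}. T s) * (hi - lo) \<le> run T S t y \<sigma> w"
    using grow[of "{r}" "n - 1" 1 "hi - lo" lo y t] r n_pos H0 rng by auto
  have sub: "set \<sigma> \<subseteq> set_pmf D" using \<sigma>(2) unfolding good_def by auto
  have "p0 ^ length \<sigma> \<le> prod_list (map (pmf D) \<sigma>)"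
    using \<sigma>(2) p0_pos unfolding good_def by (intro prod_list_ge) auto
  moreover
  have "spread n (run T S t y \<sigma>) \<le> hi - (lo + 1 * (\<Prod>s\<in>{t..<t+(n-1)}. T s) * (hi - lo))"
    using \<sigma>(3) run_range[OF sub rng] by (intro spread_le[OF n_pos]) auto
  ultimately show ?thesis using \<sigma>(1) sub H by (intro exI[of _ \<sigma>]) (auto simp: algebra_simps)
qed

end

context gos begin

abbreviation SD where "SD \<equiv> stream_space (measure_pmf D)"

lemma SD_prob: "prob_space SD"
  by (rule prob_space.prob_space_stream_space[OF prob_space_measure_pmf])

definition V :: "nat \<Rightarrow> (nat \<Rightarrow> real) \<Rightarrow> nat \<Rightarrow> ennreal" where
  "V t x m = (\<integral>\<^sup>+\<omega>. ennreal (spread n (run T S t x (stake m \<omega>))) \<partial>SD)"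

lemma AE_valid: "AE \<omega> in SD. \<forall>m. set (stake m \<omega>) \<subseteq> set_pmf D"
proof -
  have "AE \<omega> in SD. stream_all (\<lambda>s. s \<in> set_pmf D) \<omega>"
    by (rule prob_space.AE_stream_all[OF prob_space_measure_pmf]) (auto simp: AE_measure_pmf)
  then show ?thesis
  proof (rule AE_mp, intro AE_I2 impI allI subsetI)
    fix \<omega> m s assume "stream_all (\<lambda>s. s \<in> set_pmf D) \<omega>" "s \<in> set (stake m \<omega>)"
    then show "s \<in> set_pmf D" by (auto simp: stream_all_def in_set_conv_nth)
  qed
qed

lemma V_le: "V t x m \<le> ennreal (spread n x)"
proof -
  interpret P: prob_space SD by (rule SD_prob)
  have "V t x m \<le> (\<integral>\<^sup>+\<omega>. ennreal (spread n x) \<partial>SD)"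
    unfolding V_def
  proof (rule nn_integral_mono_AE)
    show "AE \<omega> in SD. ennreal (spread n (run T S t x (stake m \<omega>))) \<le> ennreal (spread n x)"
      using AE_valid by eventually_elim (auto intro: ennreal_leI spread_run)
  qed
  then show ?thesis by (simp add: P.emeasure_space_1)
qed

lemma sigma_bound:
  assumes "set \<sigma> \<subseteq> set_pmf D" "length \<sigma> = m"
  shows "V t x m + ennreal (prod_list (map (pmf D) \<sigma>) * (spread n x - spread n (run T S t x \<sigma>)))
           \<le> ennreal (spread n x)"
proof -
  interpret P: prob_space SD by (rule SD_prob)
  define \<delta> where "\<delta> = spread n x - spread n (run T S t x \<sigma>)"
  have \<delta>: "0 \<le> \<delta>" using spread_run[OF assms(1)] unfolding \<delta>_def by simp
  have pn: "0 \<le> prod_list (map (pmf D) \<sigma>)" by (rule prod_list_nonneg) auto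
  have "(\<integral>\<^sup>+\<omega>. ennreal (spread n (run T S t x (stake m \<omega>))) + ennreal \<delta> * indicator {\<sigma>} (stake m \<omega>) \<partial>SD)
        \<le> (\<integral>\<^sup>+\<omega>. ennreal (spread n x) \<partial>SD)"
  proof (rule nn_integral_mono_AE)
    show "AE \<omega> in SD. ennreal (spread n (run T S t x (stake m \<omega>))) + ennreal \<delta> * indicator {\<sigma>} (stake m \<omega>)
            \<le> ennreal (spread n x)"
      using AE_valid
    proof eventually_elim
      case (elim \<omega>)
      show ?case
      proof (cases "stake m \<omega> = \<sigma>")
        case True
        have "ennreal (spread n (run T S t x \<sigma>)) + ennreal \<delta> = ennreal (spread n (run T S t x \<sigma>) + \<delta>)"
          using \<delta> spread_nonneg[OF n_pos] by (simp add: ennreal_plus)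
        then show ?thesis using True by (simp add: \<delta>_def)
      next
        case False
        then show ?thesis using elim spread_run by (auto intro: ennreal_leI)
      qed
    qed
  qed
  also have "\<dots> = ennreal (spread n x)" by (simp add: P.emeasure_space_1)
  finally have A: "(\<integral>\<^sup>+\<omega>. ennreal (spread n (run T S t x (stake m \<omega>))) + ennreal \<delta> * indicator {\<sigma>} (stake m \<omega>) \<partial>SD)
        \<le> ennreal (spread n x)" .
  have "(\<integral>\<^sup>+\<omega>. ennreal (spread n (run T S t x (stake m \<omega>))) + ennreal \<delta> * indicator {\<sigma>} (stake m \<omega>) \<partial>SD)
      = V t x m + (\<integral>\<^sup>+\<omega>. ennreal \<delta> * indicator {\<sigma>} (stake m \<omega>) \<partial>SD)"
    unfolding V_def by (rule nn_integral_add) (auto intro: meas_stake_fun)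
  also have "(\<integral>\<^sup>+\<omega>. ennreal \<delta> * indicator {\<sigma>} (stake m \<omega>) \<partial>SD)
      = ennreal \<delta> * (\<integral>\<^sup>+\<omega>. indicator {\<omega>. stake (length \<sigma>) \<omega> = \<sigma>} \<omega> \<partial>SD)"
    using assms(2) by (subst nn_integral_cmult[symmetric]) (auto intro!: nn_integral_cong meas_stake_fun split: split_indicator)
  also have "\<dots> = ennreal (prod_list (map (pmf D) \<sigma>) * \<delta>)"
    by (simp add: nn_stake_eq ennreal_mult'' pn \<delta> mult.commute ennreal_mult)
  finally show ?thesis using A by (simp add: \<delta>_def)
qed

definition q :: real where "q = p0 ^ (n - 1)"
definition \<theta> :: "nat \<Rightarrow> real" where "\<theta> t = (\<Prod>s\<in>{t..<t+(n-1)}. T s)"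

lemma q_pos: "0 < q" unfolding q_def using p0_pos by simp
lemma q_le1: "q \<le> 1" unfolding q_def using p0_pos p0_le1 by (simp add: power_le_one)
lemma \<theta>_nonneg: "0 \<le> \<theta> t" unfolding \<theta>_def using T_range by (intro prod_nonneg) (auto intro: less_imp_le)
lemma \<theta>_le1: "\<theta> t \<le> 1" unfolding \<theta>_def using T_range by (intro prod_le_1) (auto intro: less_imp_le)

lemma V_window: "V t y (n - 1) \<le> ennreal ((1 - q * \<theta> t) * spread n y)"
proof -
  obtain \<sigma> where \<sigma>: "length \<sigma> = n - 1" "set \<sigma> \<subseteq> set_pmf D" "q \<le> prod_list (map (pmf D) \<sigma>)"
     "spread n (run T S t y \<sigma>) \<le> (1 - \<theta> t) * spread n y"
    using window[of t y] unfolding q_def \<theta>_def by blast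
  have Hy: "0 \<le> spread n y" using spread_nonneg[OF n_pos] .
  have d: "\<theta> t * spread n y \<le> spread n y - spread n (run T S t y \<sigma>)" using \<sigma>(4) by (simp add: algebra_simps)
  have "q * (\<theta> t * spread n y) \<le> prod_list (map (pmf D) \<sigma>) * (spread n y - spread n (run T S t y \<sigma>))"
    using \<sigma>(3) d q_pos Hy \<theta>_nonneg[of t] by (intro mult_mono) auto
  then have "V t y (n - 1) + ennreal (q * (\<theta> t * spread n y)) \<le> ennreal (spread n y)"
    using sigma_bound[OF \<sigma>(2,1), of t y] by (meson add_left_mono ennreal_leI order_trans)
  then have "V t y (n - 1) \<le> ennreal (spread n y) - ennreal (q * (\<theta> t * spread n y))"
    by (simp add: ennreal_le_minus_iff)
  also have "\<dots> = ennreal ((1 - q * \<theta> t) * spread n y)"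
    using q_pos \<theta>_nonneg[of t] Hy by (subst ennreal_minus) (auto simp: algebra_simps)
  finally show ?thesis .
qed

lemma markov:
  "(\<integral>\<^sup>+\<omega>. ennreal (spread n (run T S t x (stake (m + l) \<omega>))) \<partial>SD)
   = (\<integral>\<^sup>+\<omega>. V (t + m) (run T S t x (stake m \<omega>)) l \<partial>SD)"
  unfolding V_def by (subst nn_stake_add) (simp add: run_append)

end

context gos begin

definition \<Theta> :: "nat \<Rightarrow> real" where "\<Theta> j = \<theta> (j * (n - 1))"

lemma cj: "0 \<le> 1 - q * \<Theta> j"
  using q_le1 q_pos \<theta>_le1 \<theta>_nonneg unfolding \<Theta>_def by (simp add: mult_le_one)

lemma E_bound:
  "V k0 x0 ((k0 + d) * (n - 1) - k0) \<le> ennreal (spread n x0 * (\<Prod>j\<in>{k0..<k0+d}. (1 - q * \<Theta> j)))"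
proof (induct d)
  case 0
  then show ?case using V_le by simp
next
  case (Suc d)
  interpret P: prob_space SD by (rule SD_prob)
  define M where "M = (k0 + d) * (n - 1) - k0"
  have n1: "1 \<le> n - 1" using n3 by simp
  have "(k0 + d) * 1 \<le> (k0 + d) * (n - 1)" using n1 by (rule mult_le_mono2)
  then have "k0 + d \<le> (k0 + d) * (n - 1)" by (simp only: mult_1_right)
  then have ge: "k0 \<le> (k0 + d) * (n - 1)" by linarith
  have M1: "(k0 + Suc d) * (n - 1) - k0 = M + (n - 1)" unfolding M_def using ge by (simp add: algebra_simps)
  have M2: "k0 + M = (k0 + d) * (n - 1)" unfolding M_def using ge by simp
  have c0: "0 \<le> 1 - q * \<Theta> (k0 + d)"
    using q_le1 q_pos \<theta>_le1 \<theta>_nonneg unfolding \<Theta>_def by (simp add: mult_le_one)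
  have "V k0 x0 ((k0 + Suc d) * (n - 1) - k0) = (\<integral>\<^sup>+\<omega>. V (k0 + M) (run T S k0 x0 (stake M \<omega>)) (n - 1) \<partial>SD)"
    unfolding M1 using markov[of k0 x0 M "n - 1"] unfolding V_def by simp
  also have "\<dots> \<le> (\<integral>\<^sup>+\<omega>. ennreal (1 - q * \<Theta> (k0 + d)) * ennreal (spread n (run T S k0 x0 (stake M \<omega>))) \<partial>SD)"
  proof (intro nn_integral_mono)
    fix \<omega>
    have "V (k0 + M) (run T S k0 x0 (stake M \<omega>)) (n - 1)
        \<le> ennreal ((1 - q * \<Theta> (k0 + d)) * spread n (run T S k0 x0 (stake M \<omega>)))"
      using V_window unfolding M2 \<Theta>_def by blast
    also have "\<dots> = ennreal (1 - q * \<Theta> (k0 + d)) * ennreal (spread n (run T S k0 x0 (stake M \<omega>)))"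
      by (rule ennreal_mult[OF c0 spread_nonneg[OF n_pos]])
    finally show "V (k0 + M) (run T S k0 x0 (stake M \<omega>)) (n - 1)
        \<le> ennreal (1 - q * \<Theta> (k0 + d)) * ennreal (spread n (run T S k0 x0 (stake M \<omega>)))" .
  qed
  also have "\<dots> = ennreal (1 - q * \<Theta> (k0 + d)) * V k0 x0 M"
    unfolding V_def by (rule nn_integral_cmult) (rule meas_stake_fun)
  also have "\<dots> \<le> ennreal (1 - q * \<Theta> (k0 + d)) * ennreal (spread n x0 * (\<Prod>j\<in>{k0..<k0+d}. (1 - q * \<Theta> j)))"
    using Suc unfolding M_def by (intro mult_left_mono) auto
  also have "\<dots> = ennreal ((1 - q * \<Theta> (k0 + d)) * (spread n x0 * (\<Prod>j\<in>{k0..<k0+d}. (1 - q * \<Theta> j))))"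
    by (rule ennreal_mult[symmetric, OF c0]) (use cj spread_nonneg[OF n_pos] in \<open>simp add: prod_nonneg\<close>)
  also have "\<dots> = ennreal (spread n x0 * (\<Prod>j\<in>{k0..<k0+Suc d}. (1 - q * \<Theta> j)))"
    by (simp add: prod.atLeastLessThan_Suc mult_ac)
  finally show ?case .
qed

lemma prod_exp:
  "(\<Prod>j\<in>I. (1 - q * \<Theta> j)) \<le> exp (- q * (\<Sum>j\<in>I. \<Theta> j))"
proof -
  have "(\<Prod>j\<in>I. (1 - q * \<Theta> j)) \<le> (\<Prod>j\<in>I. exp (- (q * \<Theta> j)))"
  proof (rule prod_mono)
    fix j
    have "0 \<le> 1 - q * \<Theta> j" using q_le1 q_pos \<theta>_le1 \<theta>_nonneg unfolding \<Theta>_def by (simp add: mult_le_one)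
    moreover have "1 - q * \<Theta> j \<le> exp (- (q * \<Theta> j))" using exp_ge_add_one_self[of "- (q * \<Theta> j)"] by simp
    ultimately show "0 \<le> 1 - q * \<Theta> j \<and> 1 - q * \<Theta> j \<le> exp (- (q * \<Theta> j))" by simp
  qed
  also have "\<dots> = exp (- q * (\<Sum>j\<in>I. \<Theta> j))"
    by (cases "finite I") (simp_all add: exp_sum[symmetric] sum_negf sum_distrib_left)
  finally show ?thesis .
qed

end

context gos begin

lemma conv:
  assumes val: "\<forall>m. set (stake m \<omega>) \<subseteq> set_pmf D"
    and inf0: "(INF m. ennreal (spread n (run T S k0 x0 (stake m \<omega>)))) = 0"
  shows "limsup (\<lambda>k. ereal (spread n (gossip_state T S k0 x0 \<omega> k))) = 0"
proof -
  define h where "h m = spread n (run T S k0 x0 (stake m \<omega>))" for m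
  have dec: "h (Suc m) \<le> h m" for m
  proof -
    have "\<omega> !! m \<in> set (stake (Suc m) \<omega>)" by (metis lessI stake_nth nth_mem length_stake)
    then have "\<omega> !! m \<in> set_pmf D" using val by blast
    then have "set [\<omega> !! m] \<subseteq> set_pmf D" by simp
    then have "spread n (run T S (k0 + length (stake m \<omega>)) (run T S k0 x0 (stake m \<omega>)) [\<omega> !! m])
             \<le> spread n (run T S k0 x0 (stake m \<omega>))" by (rule spread_run)
    then show ?thesis unfolding h_def stake_Suc run_append by simp
  qed
  then have dseq: "decseq h" by (rule decseq_SucI)
  have pos: "0 \<le> h m" for m unfolding h_def by (rule spread_nonneg[OF n_pos])
  have lim: "h \<longlonglongrightarrow> 0"
  proof (rule LIMSEQ_I)
    fix r :: real assume r: "0 < r"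
    have "(INF m. ennreal (h m)) < ennreal r" using inf0 r unfolding h_def by simp
    then obtain m where "ennreal (h m) < ennreal r" by (auto simp: INF_less_iff)
    then have hm: "h m < r" using pos by (simp add: ennreal_less_iff)
    show "\<exists>no. \<forall>k\<ge>no. norm (h k - 0) < r"
      using hm decseqD[OF dseq] pos by (intro exI[of _ m]) (auto intro: le_less_trans)
  qed
  have lim2: "(\<lambda>k. spread n (gossip_state T S k0 x0 \<omega> k)) \<longlonglongrightarrow> 0"
  proof (rule LIMSEQ_I)
    fix r :: real assume r: "0 < r"
    obtain no where no: "\<forall>k\<ge>no. norm (h k - 0) < r" using LIMSEQ_D[OF lim r] by blast
    show "\<exists>no. \<forall>k\<ge>no. norm (spread n (gossip_state T S k0 x0 \<omega> k) - 0) < r"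
    proof (intro exI[of _ "no + k0"] allI impI)
      fix k assume "no + k0 \<le> k"
      then have "norm (h (k - k0) - 0) < r" using no by auto
      then show "norm (spread n (gossip_state T S k0 x0 \<omega> k) - 0) < r"
        unfolding h_def gossip_state_def traj_run .
    qed
  qed
  have "((\<lambda>k. ereal (spread n (gossip_state T S k0 x0 \<omega> k))) \<longlongrightarrow> ereal 0) sequentially"
    by (rule tendsto_ereal[OF lim2])
  then have "limsup (\<lambda>k. ereal (spread n (gossip_state T S k0 x0 \<omega> k))) = ereal 0"
    by (rule lim_imp_Limsup[OF trivial_limit_sequentially])
  then show ?thesis by (simp add: zero_ereal_def)
qed

lemma diverge:
  assumes div: "(\<Sum>k. ennreal (\<Prod>s\<in>{k * (n - 1) ..< (k + 1) * (n - 1)}. T s * (1 - T s))) = \<infinity>"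
  shows "\<exists>N. B \<le> (\<Sum>j\<in>{k0..<N}. \<Theta> j)"
proof (rule ccontr)
  assume "\<not> ?thesis"
  then have lt: "\<And>N. (\<Sum>j\<in>{k0..<N}. \<Theta> j) < B" by (simp add: not_le)
  define th where "th k = (\<Prod>s\<in>{k * (n - 1) ..< (k + 1) * (n - 1)}. T s * (1 - T s))" for k
  have th0: "0 \<le> th k" for k unfolding th_def
  proof (intro prod_nonneg)
    fix s show "0 \<le> T s * (1 - T s)" using T_range[of s] by (intro mult_nonneg_nonneg) auto
  qed
  have thT: "th k \<le> \<Theta> k" for k
  proof -
    have eqk: "(k + 1) * (n - 1) = k * (n - 1) + (n - 1)" by (simp only: add_mult_distrib mult_1_left)
    have e: "{k * (n - 1) ..< (k + 1) * (n - 1)} = {k * (n - 1) ..< k * (n - 1) + (n - 1)}" by (simp only: eqk)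
    show ?thesis unfolding th_def \<Theta>_def \<theta>_def e
    proof (rule prod_mono)
      fix s
      have "0 < T s" "T s \<le> 1" using T_range[of s] by auto
      then show "0 \<le> T s * (1 - T s) \<and> T s * (1 - T s) \<le> T s"
        by (auto simp: mult_le_cancel_left1 intro: mult_nonneg_nonneg)
    qed
  qed
  have \<Theta>0: "0 \<le> \<Theta> j" for j unfolding \<Theta>_def by (rule \<theta>_nonneg)
  have \<Theta>1: "\<Theta> j \<le> 1" for j unfolding \<Theta>_def by (rule \<theta>_le1)
  have "summable th"
  proof (rule summableI_nonneg_bounded[where x = "real k0 + B"])
    fix N
    have "(\<Sum>i<N. th i) \<le> (\<Sum>i<N. \<Theta> i)" using thT by (rule sum_mono)
    also have "\<dots> \<le> (\<Sum>i\<in>{..<k0} \<union> {k0..<N}. \<Theta> i)"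
      by (rule sum_mono2) (auto simp: \<Theta>0)
    also have "\<dots> = (\<Sum>i<k0. \<Theta> i) + (\<Sum>i\<in>{k0..<N}. \<Theta> i)"
      by (rule sum.union_disjoint) auto
    also have "(\<Sum>i<k0. \<Theta> i) \<le> (\<Sum>i<k0. 1)" using \<Theta>1 by (rule sum_mono)
    finally show "(\<Sum>i<N. th i) \<le> real k0 + B" using lt[of N] by simp
  qed (rule th0)
  then have "(\<Sum>k. ennreal (th k)) \<noteq> top" using th0 by (rule ennreal_suminf_neq_top)
  then show False using div unfolding th_def by simp
qed

end


context gos begin

lemma main:
  assumes div: "(\<Sum>k. ennreal (\<Prod>s\<in>{k * (n - 1) ..< (k + 1) * (n - 1)}. T s * (1 - T s))) = \<infinity>"
  shows "\<P>(\<omega> in SD. limsup (\<lambda>k. ereal (spread n (gossip_state T S k0 x0 \<omega> k))) = 0) = 1"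
proof -
  interpret P: prob_space SD by (rule SD_prob)
  define L where "L \<omega> = (INF m. ennreal (spread n (run T S k0 x0 (stake m \<omega>))))" for \<omega>
  have Lm: "L \<in> borel_measurable SD" unfolding L_def by (intro borel_measurable_INF meas_stake_fun) (auto intro: countableI_type)
  have intL: "(\<integral>\<^sup>+\<omega>. L \<omega> \<partial>SD) \<le> V k0 x0 m" for m
    unfolding V_def L_def by (intro nn_integral_mono INF_lower) simp
  have "(\<integral>\<^sup>+\<omega>. L \<omega> \<partial>SD) \<le> 0"
  proof (rule ennreal_le_epsilon)
    fix e :: real assume e: "0 < e"
    define H where "H = spread n x0"
    have H0: "0 \<le> H" unfolding H_def by (rule spread_nonneg[OF n_pos])
    define B where "B = (H + 1) / (q * e)"
    have Bpos: "0 < B" unfolding B_def using H0 q_pos e by simp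
    obtain N where N: "B \<le> (\<Sum>j\<in>{k0..<N}. \<Theta> j)" using diverge[OF div] by blast
    have kN: "k0 \<le> N"
    proof (rule ccontr)
      assume "\<not> k0 \<le> N"
      then have "{k0..<N} = {}" by auto
      then show False using N Bpos by simp
    qed
    define d where "d = N - k0"
    have Nd: "k0 + d = N" unfolding d_def using kN by simp
    have "(\<integral>\<^sup>+\<omega>. L \<omega> \<partial>SD) \<le> ennreal (H * (\<Prod>j\<in>{k0..<N}. (1 - q * \<Theta> j)))"
      using intL[of "(k0 + d) * (n - 1) - k0"] E_bound[of k0 x0 d] unfolding Nd H_def by (rule order_trans)
    also have "\<dots> \<le> ennreal (H * exp (- q * (\<Sum>j\<in>{k0..<N}. \<Theta> j)))"
      using prod_exp H0 by (intro ennreal_leI mult_left_mono) auto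
    also have "\<dots> \<le> ennreal e"
    proof (rule ennreal_leI)
      have "exp (- q * (\<Sum>j\<in>{k0..<N}. \<Theta> j)) \<le> exp (- q * B)" using N q_pos by simp
      also have "\<dots> = 1 / exp (q * B)" by (simp add: exp_minus field_simps)
      also have "\<dots> \<le> 1 / (q * B)"
      proof (rule divide_left_mono)
        show "q * B \<le> exp (q * B)" using exp_ge_add_one_self[of "q * B"] by linarith
        show "0 < exp (q * B) * (q * B)" using q_pos Bpos by simp
      qed simp
      also have "\<dots> = e / (H + 1)"
      proof -
        have "q * B = (H + 1) / e" unfolding B_def using q_pos e by simp
        then show ?thesis by simp
      qed
      finally have x: "exp (- q * (\<Sum>j\<in>{k0..<N}. \<Theta> j)) \<le> e / (H + 1)" .
      have "H * exp (- q * (\<Sum>j\<in>{k0..<N}. \<Theta> j)) \<le> H * (e / (H + 1))"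
        using x H0 by (rule mult_left_mono)
      also have "\<dots> \<le> e" using H0 e by (simp add: field_simps)
      finally show "H * exp (- q * (\<Sum>j\<in>{k0..<N}. \<Theta> j)) \<le> e" .
    qed
    finally show "(\<integral>\<^sup>+\<omega>. L \<omega> \<partial>SD) \<le> 0 + ennreal e" by simp
  qed
  then have "(\<integral>\<^sup>+\<omega>. L \<omega> \<partial>SD) = 0" by simp
  then have AEL: "AE \<omega> in SD. L \<omega> = 0" using nn_integral_0_iff_AE[OF Lm] by simp
  have fk: "(\<lambda>\<omega>. ereal (spread n (gossip_state T S k0 x0 \<omega> k))) \<in> borel_measurable SD" for k
    unfolding gossip_state_def traj_run by (rule meas_stake_fun)
  have FM: "(\<lambda>\<omega>. limsup (\<lambda>k. ereal (spread n (gossip_state T S k0 x0 \<omega> k)))) \<in> borel_measurable SD"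
    unfolding limsup_INF_SUP by (intro borel_measurable_INF borel_measurable_SUP fk) (auto intro: countableI_type)
  have meas: "{\<omega> \<in> space SD. limsup (\<lambda>k. ereal (spread n (gossip_state T S k0 x0 \<omega> k))) = 0} \<in> sets SD"
    using FM by measurable
  have "AE \<omega> in SD. limsup (\<lambda>k. ereal (spread n (gossip_state T S k0 x0 \<omega> k))) = 0"
    using AE_valid AEL by eventually_elim (rule conv, auto simp: L_def)
  then show ?thesis using P.prob_Collect_eq_1[OF meas] by simp
qed

end

theorem proposition2:
  fixes n :: nat and a :: "nat \<Rightarrow> nat \<Rightarrow> real"
    and J :: "(act \<times> act) pmf" and D :: "step pmf"
    and \<alpha> \<beta> \<gamma> :: real
    and T S :: "nat \<Rightarrow> real"
  assumes n3: "n \<ge> 3"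
    and stoch: "stochastic_matrix n a"
    and D_def: "\<And>i j ei ej. pmf D (i, j, ei, ej) =
                 (if i < n \<and> j < n then (1 / real n) * a i j * pmf J (ei, ej) else 0)"
    and alpha_pos: "\<alpha> > 0"
    and sum1: "\<alpha> + \<beta> + \<gamma> = 1"
    and marg_i: "pmf (map_pmf fst J) Att = \<alpha>" "pmf (map_pmf fst J) Neu = \<beta>"
                "pmf (map_pmf fst J) Rep = \<gamma>"
    and marg_j: "pmf (map_pmf snd J) Att = \<alpha>" "pmf (map_pmf snd J) Neu = \<beta>"
                "pmf (map_pmf snd J) Rep = \<gamma>"
    and T_range: "\<And>k. 0 < T k \<and> T k \<le> 1"
    and S_pos: "\<And>k. S k > 0"
    and A1: "weakly_connected n a"
    and A2: "\<gamma> = 0"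
    and A4: "pmf J (Att, Att) = 0"
    and div: "(\<Sum>k. ennreal (\<Prod>s\<in>{k * (n - 1) ..< (k + 1) * (n - 1)}. T s * (1 - T s))) = \<infinity>"
  shows "\<forall>k0 (x0 :: nat \<Rightarrow> real).
           \<P>(\<omega> in stream_space (measure_pmf D).
               limsup (\<lambda>k. ereal (spread n (gossip_state T S k0 x0 \<omega> k))) = 0) = 1"
proof -
  interpret G: gos n a J D \<alpha> \<beta> \<gamma> T S
    using assms by unfold_locales auto
  show ?thesis using G.main[OF div] by blast
qed

end
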